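(* Under the standing assumptions below, let $\{\rho_k\}$, $\{\epsilon_k\}$ be positive sequences with $\rho_k\to\infty$ and $\epsilon_k\to0$, and for each $k$ let $(x^k,y^k,\lambda^k,z^k)\in\mathcal X\times\mathcal Y\times\Lambda\times\mathcal Y$ be an $\epsilon_k$-optimal solution of $\min_{x\in\mathcal X}\max_{y\in\mathcal Y,\lambda\in\Lambda}\min_{z\in\mathcal Y}P_{\rho_k}(x,y,\lambda,z)$. Then every accumulation point $(x_\infty,y_\infty,\lambda_\infty)$ of $\{(x^k,y^k,\lambda^k)\}$ is a global minimax point of the minimax bilevel problem, i.e. $(y_\infty,\lambda_\infty)\in\mathcal F_{\rm low}$, $x_\infty\in\arg\min_{x\in\mathcal X}\Phi(x)$, and $(y_\infty,\lambda_\infty)\in\arg\max_{(y,\lambda)\in\mathcal F_{\rm low}}f(x_\infty,y,\lambda)$.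
   Context: Standing setting. $\mathcal X\subset\mathbb R^{d_x}$, $\mathcal Y\subset\mathbb R^{d_y}$, $\Lambda\subset\mathbb R^{d_\lambda}$ are nonempty convex compact sets. $\bar f:\mathbb R^{d_x}\times\mathbb R^{d_y}\to\mathbb R$ is continuously differentiable with $\nabla\bar f$ Lipschitz on $\mathcal X\times\mathcal Y$; $A\in\mathbb R^{d_\lambda\times d_x}$, $B\in\mathbb R^{d_\lambda\times d_y}$, $c\in\mathbb R^{d_\lambda}$, and $f(x,y,\lambda):=\bar f(x,y)+\lambda^T(Ax+By-c)$. $g:\mathbb R^{d_y}\times\mathbb R^{d_\lambda}\to\mathbb R$ is continuously differentiable with $\nabla g$ Lipschitz on $\mathcal Y\times\Lambda$, and $g(\cdot,\lambda)$ is convex for each $\lambda\in\Lambda$. Definitions: $\mathcal F_{\rm low}:=\{(y,\lambda)\in\mathcal Y\times\Lambda:\ g(y,\lambda)=\min_{z\in\mathcal Y}g(z,\lambda)\}$; $P_\rho(x,y,\lambda,z):=f(x,y,\lambda)-\rho(g(y,\lambda)-g(z,\lambda))$; $F_\rho(x):=\max_{y\in\mathcal Y,\lambda\in\Lambda}\min_{z\in\mathcal Y}P_\rho(x,y,\lambda,z)$; $\Phi_\rho^*:=\min_{x\in\mathcal X}F_\rho(x)$; $\Phi(x):=\max_{(y,\lambda)\in\mathcal F_{\rm low}}f(x,y,\lambda)$. A point $(x_\epsilon,y_\epsilon,\lambda_\epsilon,z_\epsilon)\in\mathcal X\times\mathcal Y\times\Lambda\times\mathcal Y$ is an $\epsilon$-optimal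 solution of $\min_{x}\max_{y,\lambda}\min_{z}P_\rho$ if (i) $P_\rho(x_\epsilon,y_\epsilon,\lambda_\epsilon,z_\epsilon)-\min_{z\in\mathcal Y}P_\rho(x_\epsilon,y_\epsilon,\lambda_\epsilon,z)\le\epsilon$, (ii) $F_\rho(x_\epsilon)-P_\rho(x_\epsilon,y_\epsilon,\lambda_\epsilon,z_\epsilon)\le\epsilon$, and (iii) $P_\rho(x_\epsilon,y_\epsilon,\lambda_\epsilon,z_\epsilon)-\Phi_\rho^*\le\epsilon$. *)

theory Defs
  imports "HOL-Analysis.Analysis"
begin

definition fobj :: "(real^'dx \<Rightarrow> real^'dy \<Rightarrow> real) \<Rightarrow> real^'dx^'dl \<Rightarrow> real^'dy^'dl \<Rightarrow> real^'dl
    \<Rightarrow> real^'dx \<Rightarrow> real^'dy \<Rightarrow> real^'dl \<Rightarrow> real" where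
  "fobj fbar A B c x y l = fbar x y + l \<bullet> (A *v x + B *v y - c)"

definition Flow :: "(real^'dy) set \<Rightarrow> (real^'dl) set \<Rightarrow> (real^'dy \<Rightarrow> real^'dl \<Rightarrow> real)
    \<Rightarrow> ((real^'dy) \<times> (real^'dl)) set" where
  "Flow Y Lam g = {(y, l). y \<in> Y \<and> l \<in> Lam \<and> g y l = (INF z\<in>Y. g z l)}"

definition Ppen :: "real \<Rightarrow> (real^'dx \<Rightarrow> real^'dy \<Rightarrow> real) \<Rightarrow> real^'dx^'dl \<Rightarrow> real^'dy^'dl \<Rightarrow> real^'dl
    \<Rightarrow> (real^'dy \<Rightarrow> real^'dl \<Rightarrow> real)
    \<Rightarrow> real^'dx \<Rightarrow> real^'dy \<Rightarrow> real^'dl \<Rightarrow> real^'dy \<Rightarrow> real" where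
  "Ppen rho fbar A B c g x y l z = fobj fbar A B c x y l - rho * (g y l - g z l)"

definition Frho :: "(real^'dy) set \<Rightarrow> (real^'dl) set \<Rightarrow> real \<Rightarrow> (real^'dx \<Rightarrow> real^'dy \<Rightarrow> real)
    \<Rightarrow> real^'dx^'dl \<Rightarrow> real^'dy^'dl \<Rightarrow> real^'dl \<Rightarrow> (real^'dy \<Rightarrow> real^'dl \<Rightarrow> real)
    \<Rightarrow> real^'dx \<Rightarrow> real" where
  "Frho Y Lam rho fbar A B c g x =
     (SUP p\<in>Y \<times> Lam. INF z\<in>Y. Ppen rho fbar A B c g x (fst p) (snd p) z)"

definition Phistar :: "(real^'dx) set \<Rightarrow> (real^'dy) set \<Rightarrow> (real^'dl) set \<Rightarrow> real \<Rightarrow> (real^'dx \<Rightarrow> real^'dy \<Rightarrow> real)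
    \<Rightarrow> real^'dx^'dl \<Rightarrow> real^'dy^'dl \<Rightarrow> real^'dl \<Rightarrow> (real^'dy \<Rightarrow> real^'dl \<Rightarrow> real) \<Rightarrow> real" where
  "Phistar X Y Lam rho fbar A B c g = (INF x\<in>X. Frho Y Lam rho fbar A B c g x)"

definition Phi :: "(real^'dy) set \<Rightarrow> (real^'dl) set \<Rightarrow> (real^'dx \<Rightarrow> real^'dy \<Rightarrow> real)
    \<Rightarrow> real^'dx^'dl \<Rightarrow> real^'dy^'dl \<Rightarrow> real^'dl \<Rightarrow> (real^'dy \<Rightarrow> real^'dl \<Rightarrow> real)
    \<Rightarrow> real^'dx \<Rightarrow> real" where
  "Phi Y Lam fbar A B c g x = (SUP p\<in>Flow Y Lam g. fobj fbar A B c x (fst p) (snd p))"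

definition eps_optimal :: "(real^'dx) set \<Rightarrow> (real^'dy) set \<Rightarrow> (real^'dl) set \<Rightarrow> real \<Rightarrow> (real^'dx \<Rightarrow> real^'dy \<Rightarrow> real)
    \<Rightarrow> real^'dx^'dl \<Rightarrow> real^'dy^'dl \<Rightarrow> real^'dl \<Rightarrow> (real^'dy \<Rightarrow> real^'dl \<Rightarrow> real) \<Rightarrow> real
    \<Rightarrow> real^'dx \<Rightarrow> real^'dy \<Rightarrow> real^'dl \<Rightarrow> real^'dy \<Rightarrow> bool" where
  "eps_optimal X Y Lam rho fbar A B c g eps x y l z \<longleftrightarrow>
     x \<in> X \<and> y \<in> Y \<and> l \<in> Lam \<and> z \<in> Y \<and>
     Ppen rho fbar A B c g x y l z - (INF z'\<in>Y. Ppen rho fbar A B c g x y l z') \<le> eps \<and>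
     Frho Y Lam rho fbar A B c g x - Ppen rho fbar A B c g x y l z \<le> eps \<and>
     Ppen rho fbar A B c g x y l z - Phistar X Y Lam rho fbar A B c g \<le> eps"

end

theory Submission
  imports Defs
begin

theorem mainTheorem3:
  fixes X :: "(real^'dx) set" and Y :: "(real^'dy) set" and Lam :: "(real^'dl) set"
    and fbar :: "real^'dx \<Rightarrow> real^'dy \<Rightarrow> real"
    and Gf :: "(real^'dx) \<times> (real^'dy) \<Rightarrow> (real^'dx) \<times> (real^'dy)"
    and A :: "real^'dx^'dl" and B :: "real^'dy^'dl" and c :: "real^'dl"
    and g :: "real^'dy \<Rightarrow> real^'dl \<Rightarrow> real"
    and Gg :: "(real^'dy) \<times> (real^'dl) \<Rightarrow> (real^'dy) \<times> (real^'dl)"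
    and rho eps :: "nat \<Rightarrow> real"
    and xs :: "nat \<Rightarrow> real^'dx" and ys zs :: "nat \<Rightarrow> real^'dy" and ls :: "nat \<Rightarrow> real^'dl"
    and xinf :: "real^'dx" and yinf :: "real^'dy" and linf :: "real^'dl"
  assumes X: "convex X" "compact X" "X \<noteq> {}"
    and Y: "convex Y" "compact Y" "Y \<noteq> {}"
    and Lam: "convex Lam" "compact Lam" "Lam \<noteq> {}"
    and fbar_diff: "\<And>p. ((\<lambda>q. fbar (fst q) (snd q)) has_derivative (\<lambda>h. Gf p \<bullet> h)) (at p)"
    and fbar_C1: "continuous_on UNIV Gf"
    and fbar_Lip: "\<exists>L. \<forall>p\<in>X \<times> Y. \<forall>q\<in>X \<times> Y. norm (Gf p - Gf q) \<le> L * norm (p - q)"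
    and g_diff: "\<And>p. ((\<lambda>q. g (fst q) (snd q)) has_derivative (\<lambda>h. Gg p \<bullet> h)) (at p)"
    and g_C1: "continuous_on UNIV Gg"
    and g_Lip: "\<exists>L. \<forall>p\<in>Y \<times> Lam. \<forall>q\<in>Y \<times> Lam. norm (Gg p - Gg q) \<le> L * norm (p - q)"
    and g_convex: "\<And>l. l \<in> Lam \<Longrightarrow> convex_on UNIV (\<lambda>y. g y l)"
    and rho_pos: "\<And>k. rho k > 0" and rho_lim: "filterlim rho at_top sequentially"
    and eps_pos: "\<And>k. eps k > 0" and eps_lim: "eps \<longlonglongrightarrow> 0"
    and opt: "\<And>k. eps_optimal X Y Lam (rho k) fbar A B c g (eps k) (xs k) (ys k) (ls k) (zs k)"
    and acc: "\<exists>r. strict_mono r \<and> ((\<lambda>k. (xs (r k), ys (r k), ls (r k))) \<longlongrightarrow> (xinf, yinf, linf)) sequentially"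
  shows "(yinf, linf) \<in> Flow Y Lam g
    \<and> xinf \<in> X \<and> (\<forall>x\<in>X. Phi Y Lam fbar A B c g xinf \<le> Phi Y Lam fbar A B c g x)
    \<and> (\<forall>p\<in>Flow Y Lam g. fobj fbar A B c xinf (fst p) (snd p) \<le> fobj fbar A B c xinf yinf linf)"
proof -
  define fo where "fo = fobj fbar A B c"
  have Pdef: "\<And>r x y l z. Ppen r fbar A B c g x y l z = fo x y l - r*(g y l - g z l)"
    by (simp add: Ppen_def fo_def)
  have contF0: "continuous_on UNIV (\<lambda>q. fbar (fst q) (snd q))"
    by (intro continuous_at_imp_continuous_on ballI has_derivative_continuous[OF fbar_diff])
  have contG: "continuous_on UNIV (\<lambda>q. g (fst q) (snd q))"
    by (intro continuous_at_imp_continuous_on ballI has_derivative_continuous[OF g_diff])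
  have contf: "continuous_on UNIV (\<lambda>q. fo (fst q) (fst (snd q)) (snd (snd q)))"
  proof -
    have c0: "continuous_on UNIV (\<lambda>q::(real^'dx)\<times>(real^'dy)\<times>(real^'dl). snd (snd q))"
      by (intro continuous_on_snd continuous_on_id)
    have c1: "continuous_on UNIV (\<lambda>q::(real^'dx)\<times>(real^'dy)\<times>(real^'dl). fst q)"
      by (intro continuous_on_fst continuous_on_id)
    have c2: "continuous_on UNIV (\<lambda>q::(real^'dx)\<times>(real^'dy)\<times>(real^'dl). fst (snd q))"
      by (intro continuous_on_fst continuous_on_snd continuous_on_id)
    have c3: "continuous_on UNIV (\<lambda>q::(real^'dx)\<times>(real^'dy)\<times>(real^'dl). (fst q, fst (snd q)))"
      by (intro continuous_on_Pair c1 c2)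
    have h1: "continuous_on UNIV (\<lambda>q::(real^'dx)\<times>(real^'dy)\<times>(real^'dl). fbar (fst q) (fst (snd q)))"
      using continuous_on_compose2[OF contF0 c3 subset_UNIV] by simp
    have h2: "continuous_on UNIV (\<lambda>x::(real^'dx)\<times>(real^'dy)\<times>(real^'dl). A *v fst x)"
      using continuous_on_compose2[OF matrix_vector_mult_linear_continuous_on[of UNIV A] c1 subset_UNIV] by simp
    have h3: "continuous_on UNIV (\<lambda>x::(real^'dx)\<times>(real^'dy)\<times>(real^'dl). B *v fst (snd x))"
      using continuous_on_compose2[OF matrix_vector_mult_linear_continuous_on[of UNIV B] c2 subset_UNIV] by simp
    have "continuous_on UNIV (\<lambda>q::(real^'dx)\<times>(real^'dy)\<times>(real^'dl). fbar (fst q) (fst (snd q)) + snd (snd q) \<bullet> (A *v fst q + B *v fst (snd q) - c))"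
      by (intro continuous_on_add h1 continuous_on_inner c0 continuous_on_diff h2 h3 continuous_on_const)
    then show ?thesis unfolding fo_def fobj_def .
  qed
  have isf: "isCont (\<lambda>q. fo (fst q) (fst (snd q)) (snd (snd q))) q" for q
    by (rule continuous_on_interior[OF contf]) simp
  have isg: "isCont (\<lambda>q. g (fst q) (snd q)) q" for q
    by (rule continuous_on_interior[OF contG]) simp
  have tfo: "(\<lambda>k. fo (a k) (b k) (d k)) \<longlonglongrightarrow> fo a0 b0 d0"
    if "a \<longlonglongrightarrow> a0" "b \<longlonglongrightarrow> b0" "d \<longlonglongrightarrow> d0" for a b d a0 b0 d0
    using isCont_tendsto_compose[OF isf tendsto_Pair[OF that(1) tendsto_Pair[OF that(2,3)]]] by simp
  have tg: "(\<lambda>k. g (b k) (d k)) \<longlonglongrightarrow> g b0 d0"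
    if "b \<longlonglongrightarrow> b0" "d \<longlonglongrightarrow> d0" for b d b0 d0
    using isCont_tendsto_compose[OF isg tendsto_Pair[OF that(1,2)]] by simp
  obtain M where M: "\<And>x y l. x\<in>X \<Longrightarrow> y\<in>Y \<Longrightarrow> l\<in>Lam \<Longrightarrow> \<bar>fo x y l\<bar> \<le> M"
  proof -
    have "compact ((\<lambda>q. fo (fst q) (fst (snd q)) (snd (snd q))) ` (X \<times> Y \<times> Lam))"
      by (intro compact_continuous_image continuous_on_subset[OF contf] compact_Times X Y Lam) auto
    then have "bounded ((\<lambda>q. fo (fst q) (fst (snd q)) (snd (snd q))) ` (X \<times> Y \<times> Lam))"
      by (rule compact_imp_bounded)
    then obtain M where M: "\<forall>v\<in>(\<lambda>q. fo (fst q) (fst (snd q)) (snd (snd q))) ` (X \<times> Y \<times> Lam). norm v \<le> M"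
      unfolding bounded_iff by blast
    show ?thesis
    proof (rule that)
      fix x y l assume "x\<in>X" "y\<in>Y" "l\<in>Lam"
      then have "fo x y l \<in> (\<lambda>q. fo (fst q) (fst (snd q)) (snd (snd q))) ` (X \<times> Y \<times> Lam)"
        by (intro image_eqI[where x="(x,y,l)"]) auto
      then show "\<bar>fo x y l\<bar> \<le> M" using M by fastforce
    qed
  qed
  obtain G where G: "\<And>y l. y\<in>Y \<Longrightarrow> l\<in>Lam \<Longrightarrow> \<bar>g y l\<bar> \<le> G"
  proof -
    have "compact ((\<lambda>q. g (fst q) (snd q)) ` (Y \<times> Lam))"
      by (intro compact_continuous_image continuous_on_subset[OF contG] compact_Times Y Lam) auto
    then have "bounded ((\<lambda>q. g (fst q) (snd q)) ` (Y \<times> Lam))"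
      by (rule compact_imp_bounded)
    then obtain G where G: "\<forall>v\<in>(\<lambda>q. g (fst q) (snd q)) ` (Y \<times> Lam). norm v \<le> G"
      unfolding bounded_iff by blast
    show ?thesis
    proof (rule that)
      fix y l assume "y\<in>Y" "l\<in>Lam"
      then have "g y l \<in> (\<lambda>q. g (fst q) (snd q)) ` (Y \<times> Lam)"
        by (intro image_eqI[where x="(y,l)"]) auto
      then show "\<bar>g y l\<bar> \<le> G" using G by fastforce
    qed
  qed
  have Yne: "Y \<noteq> {}" using Y by simp
  have bddP: "bdd_below ((\<lambda>z. Ppen r fbar A B c g x y l z) ` Y)"
    if "r \<ge> 0" "x\<in>X" "y\<in>Y" "l\<in>Lam" for r x y l
  proof (rule bdd_belowI2)
    fix z assume z: "z \<in> Y"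
    have "r*(g y l - g z l) \<le> r*(2*G)"
      using G[OF that(3,4)] G[OF z that(4)] that(1) by (intro mult_left_mono) auto
    then show "-M - r*(2*G) \<le> Ppen r fbar A B c g x y l z"
      unfolding Pdef using M[OF that(2,3,4)] by linarith
  qed
  have INFle: "(INF z'\<in>Y. Ppen r fbar A B c g x y l z') \<le> fo x y l - r*(g y l - g z l)"
    if "r \<ge> 0" "x\<in>X" "y\<in>Y" "l\<in>Lam" "z\<in>Y" for r x y l z
    using cINF_lower[OF bddP[OF that(1-4)] that(5)] unfolding Pdef .
  have INFge: "fo x y l \<le> (INF z\<in>Y. Ppen r fbar A B c g x y l z)"
    if "r \<ge> 0" "\<forall>z\<in>Y. g y l \<le> g z l" for r x y l
  proof (rule cINF_greatest[OF Yne])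
    fix z assume "z\<in>Y"
    then have "r*(g y l - g z l) \<le> 0" using that by (simp add: mult_nonneg_nonpos)
    then show "fo x y l \<le> Ppen r fbar A B c g x y l z" unfolding Pdef by simp
  qed
  have bddS: "bdd_above ((\<lambda>p. INF z\<in>Y. Ppen r fbar A B c g x (fst p) (snd p) z) ` (Y\<times>Lam))"
    if "r \<ge> 0" "x\<in>X" for r x
  proof (rule bdd_aboveI2)
    fix p assume p: "p \<in> Y\<times>Lam"
    then have "(INF z\<in>Y. Ppen r fbar A B c g x (fst p) (snd p) z) \<le> fo x (fst p) (snd p)"
      using INFle[OF that, of "fst p" "snd p" "fst p"] by auto
    also have "\<dots> \<le> M" using M[OF that(2), of "fst p" "snd p"] p by auto
    finally show "(INF z\<in>Y. Ppen r fbar A B c g x (fst p) (snd p) z) \<le> M" .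
  qed
  have Fge: "(INF z\<in>Y. Ppen r fbar A B c g x y l z) \<le> Frho Y Lam r fbar A B c g x"
    if "r \<ge> 0" "x\<in>X" "y\<in>Y" "l\<in>Lam" for r x y l
    unfolding Frho_def using cSUP_upper[OF _ bddS[OF that(1,2)], of "(y,l)"] that by auto
  have bddg: "bdd_below ((\<lambda>z. g z l) ` Y)" if "l \<in> Lam" for l
    using G[OF _ that] by (intro bdd_belowI2[where m="-G"]) force
  have FlowI: "(y,l)\<in>Flow Y Lam g \<longleftrightarrow> y\<in>Y \<and> l\<in>Lam \<and> (\<forall>z\<in>Y. g y l \<le> g z l)" for y l
  proof
    assume h: "(y,l)\<in>Flow Y Lam g"
    then show "y\<in>Y \<and> l\<in>Lam \<and> (\<forall>z\<in>Y. g y l \<le> g z l)"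
      unfolding Flow_def using cINF_lower[OF bddg] by auto
  next
    assume h: "y\<in>Y \<and> l\<in>Lam \<and> (\<forall>z\<in>Y. g y l \<le> g z l)"
    then have "g y l = (INF z\<in>Y. g z l)"
      by (intro antisym cINF_greatest[OF Yne] cINF_lower[OF bddg]) auto
    then show "(y,l)\<in>Flow Y Lam g" unfolding Flow_def using h by auto
  qed
  obtain y0 l0 where yl0: "(y0,l0) \<in> Flow Y Lam g"
  proof -
    obtain l0 where l0: "l0 \<in> Lam" using Lam by auto
    have "continuous_on Y (\<lambda>y. g y l0)"
    proof -
      have c1: "continuous_on Y (\<lambda>y. (y, l0))"
        by (intro continuous_intros)
      show ?thesis using continuous_on_compose2[OF contG c1] by simp
    qed
    then obtain y0 where "y0\<in>Y" "\<forall>z\<in>Y. g y0 l0 \<le> g z l0"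
      using continuous_attains_inf[OF Y(2) Yne] by blast
    then show ?thesis using that[of y0 l0] FlowI l0 by blast
  qed
  have Fflow: "fo x y l \<le> Frho Y Lam r fbar A B c g x"
    if "r \<ge> 0" "x\<in>X" "(y,l)\<in>Flow Y Lam g" for r x y l
    using INFge[OF that(1), of y l x] Fge[OF that(1,2), of y l] that(3) FlowI by force
  have Fbelow: "-M \<le> Frho Y Lam r fbar A B c g x" if "r \<ge> 0" "x\<in>X" for r x
    using Fflow[OF that yl0] M[OF that(2), of y0 l0] yl0 FlowI by force
  have Phile: "Phistar X Y Lam r fbar A B c g \<le> Frho Y Lam r fbar A B c g x"
    if "r \<ge> 0" "x\<in>X" for r x
    unfolding Phistar_def
    by (rule cINF_lower[OF _ that(2)], rule bdd_belowI2[where m="-M"], rule Fbelow[OF that(1)])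
  have Phiup: "fo x (fst p) (snd p) \<le> Phi Y Lam fbar A B c g x"
    if "x\<in>X" "p\<in>Flow Y Lam g" for x p
    unfolding Phi_def fo_def[symmetric]
  proof (rule cSUP_upper[OF that(2)], rule bdd_aboveI2[where M=M])
    fix q assume "q\<in>Flow Y Lam g"
    then show "fo x (fst q) (snd q) \<le> M" using M[OF that(1), of "fst q" "snd q"] FlowI[of "fst q" "snd q"] by auto
  qed
  have rge: "rho k \<ge> 0" for k using rho_pos[of k] by simp
  have optk: "xs k \<in> X" "ys k \<in> Y" "ls k \<in> Lam" "zs k \<in> Y"
    "Ppen (rho k) fbar A B c g (xs k) (ys k) (ls k) (zs k) - (INF z'\<in>Y. Ppen (rho k) fbar A B c g (xs k) (ys k) (ls k) z') \<le> eps k"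
    "Frho Y Lam (rho k) fbar A B c g (xs k) - Ppen (rho k) fbar A B c g (xs k) (ys k) (ls k) (zs k) \<le> eps k"
    "Ppen (rho k) fbar A B c g (xs k) (ys k) (ls k) (zs k) - Phistar X Y Lam (rho k) fbar A B c g \<le> eps k"
    for k using opt[of k] unfolding eps_optimal_def by auto
  have key1: "fo (xs k) (fst p) (snd p) \<le> fo (xs k) (ys k) (ls k) - rho k * (g (ys k) (ls k) - g z (ls k)) + 2*eps k"
    if "p \<in> Flow Y Lam g" "z \<in> Y" for k p z
  proof -
    have "fo (xs k) (fst p) (snd p) \<le> Frho Y Lam (rho k) fbar A B c g (xs k)"
      using Fflow[OF rge optk(1), of "fst p" "snd p"] that(1) by simp
    moreover have "(INF z'\<in>Y. Ppen (rho k) fbar A B c g (xs k) (ys k) (ls k) z') \<le> fo (xs k) (ys k) (ls k) - rho k * (g (ys k) (ls k) - g z (ls k))"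
      using INFle[OF rge optk(1) optk(2) optk(3) that(2)] .
    ultimately show ?thesis using optk(5)[of k] optk(6)[of k] by linarith
  qed
  have key2: "fo (xs k) yinf linf - 2*eps k \<le> Frho Y Lam (rho k) fbar A B c g x"
    if "(yinf,linf) \<in> Flow Y Lam g" "x \<in> X" for k x
    using Fflow[OF rge[of k] optk(1)[of k] that(1)] Phile[OF rge that(2), of k] optk(6)[of k] optk(7)[of k]
    by linarith
  obtain r where r: "strict_mono r"
    and lim: "(\<lambda>k. (xs (r k), ys (r k), ls (r k))) \<longlonglongrightarrow> (xinf, yinf, linf)"
    using acc by blast
  have xl: "(\<lambda>k. xs (r k)) \<longlonglongrightarrow> xinf" using tendsto_fst[OF lim] by simp
  have yl: "(\<lambda>k. ys (r k)) \<longlonglongrightarrow> yinf" using tendsto_fst[OF tendsto_snd[OF lim]] by simp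
  have ll: "(\<lambda>k. ls (r k)) \<longlonglongrightarrow> linf" using tendsto_snd[OF tendsto_snd[OF lim]] by simp
  have epsr: "(\<lambda>k. eps (r k)) \<longlonglongrightarrow> 0" using LIMSEQ_subseq_LIMSEQ[OF eps_lim r] by (simp add: comp_def)
  have rhor: "filterlim (\<lambda>k. rho (r k)) at_top sequentially"
    using filterlim_compose[OF rho_lim filterlim_subseq[OF r]] .
  have xinfX: "xinf \<in> X"
    by (rule closed_sequentially[OF compact_imp_closed[OF X(2)] _ xl]) (use optk in auto)
  have yinfY: "yinf \<in> Y"
    by (rule closed_sequentially[OF compact_imp_closed[OF Y(2)] _ yl]) (use optk in auto)
  have linfL: "linf \<in> Lam"
    by (rule closed_sequentially[OF compact_imp_closed[OF Lam(2)] _ ll]) (use optk in auto)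
  have gmin: "g yinf linf \<le> g z linf" if z: "z \<in> Y" for z
  proof -
    have ineq: "g (ys (r k)) (ls (r k)) - g z (ls (r k)) \<le> (2*M + 2*eps (r k)) / rho (r k)" for k
    proof -
      have "fo (xs (r k)) y0 l0 \<le> fo (xs (r k)) (ys (r k)) (ls (r k)) - rho (r k) * (g (ys (r k)) (ls (r k)) - g z (ls (r k))) + 2*eps (r k)"
        using key1[OF yl0 z, of "r k"] by simp
      moreover have "\<bar>fo (xs (r k)) y0 l0\<bar> \<le> M" using M[OF optk(1)] yl0 FlowI by blast
      moreover have "\<bar>fo (xs (r k)) (ys (r k)) (ls (r k))\<bar> \<le> M" using M[OF optk(1) optk(2) optk(3)] .
      ultimately have "(g (ys (r k)) (ls (r k)) - g z (ls (r k))) * rho (r k) \<le> 2*M + 2*eps (r k)"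
        by (simp add: mult.commute)
      then show ?thesis by (simp add: pos_le_divide_eq[OF rho_pos])
    qed
    have t1: "(\<lambda>k. g (ys (r k)) (ls (r k)) - g z (ls (r k))) \<longlonglongrightarrow> g yinf linf - g z linf"
      by (intro tendsto_diff tg yl ll tendsto_const)
    have t2: "(\<lambda>k. (2*M + 2*eps (r k)) / rho (r k)) \<longlonglongrightarrow> 0"
    proof (rule tendsto_divide_0[OF _ filterlim_at_top_imp_at_infinity[OF rhor]])
      show "(\<lambda>k. 2*M + 2*eps (r k)) \<longlonglongrightarrow> 2*M + 2*0"
        by (intro tendsto_add tendsto_mult tendsto_const epsr)
    qed
    have "g yinf linf - g z linf \<le> 0"
      using LIMSEQ_le[OF t1 t2] ineq by blast
    then show ?thesis by simp
  qed
  have inflow: "(yinf, linf) \<in> Flow Y Lam g" using FlowI yinfY linfL gmin by blast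
  have part3: "fo xinf (fst p) (snd p) \<le> fo xinf yinf linf" if p: "p \<in> Flow Y Lam g" for p
  proof -
    have ineq: "fo (xs (r k)) (fst p) (snd p) \<le> fo (xs (r k)) (ys (r k)) (ls (r k)) + 2*eps (r k)" for k
      using key1[OF p optk(2)[of "r k"], of "r k"] by simp
    have t1: "(\<lambda>k. fo (xs (r k)) (fst p) (snd p)) \<longlonglongrightarrow> fo xinf (fst p) (snd p)"
      by (intro tfo xl tendsto_const)
    have t2: "(\<lambda>k. fo (xs (r k)) (ys (r k)) (ls (r k)) + 2*eps (r k)) \<longlonglongrightarrow> fo xinf yinf linf + 2*0"
      by (intro tendsto_add tfo xl yl ll tendsto_mult tendsto_const epsr)
    show ?thesis using LIMSEQ_le[OF t1 t2] ineq by simp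
  qed
  have Flowne: "Flow Y Lam g \<noteq> {}" using yl0 by blast
  have Phiinf: "Phi Y Lam fbar A B c g xinf = fo xinf yinf linf"
  proof (rule antisym)
    show "Phi Y Lam fbar A B c g xinf \<le> fo xinf yinf linf"
      unfolding Phi_def fo_def[symmetric]
      by (rule cSUP_least[OF Flowne]) (rule part3)
    show "fo xinf yinf linf \<le> Phi Y Lam fbar A B c g xinf"
      using Phiup[OF xinfX inflow] by simp
  qed
  have part2: "Phi Y Lam fbar A B c g xinf \<le> Phi Y Lam fbar A B c g x" if x: "x \<in> X" for x
  proof (rule ccontr)
    assume nc: "\<not> ?thesis"
    define a where "a = fo xinf yinf linf"
    define phi where "phi = Phi Y Lam fbar A B c g x"
    have aphi: "phi < a" using nc Phiinf unfolding a_def phi_def by simp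
    define del where "del = (a - phi) / 3"
    have delpos: "del > 0" using aphi unfolding del_def by simp
    define K where "K = (Y \<times> Lam) \<inter> {q. phi + del \<le> fo x (fst q) (snd q)}"
    have contK: "continuous_on UNIV (\<lambda>q. fo x (fst q) (snd q))"
    proof -
      have cP: "continuous_on UNIV (\<lambda>q::(real^'dy)\<times>(real^'dl). (x, fst q, snd q))"
        by (intro continuous_on_Pair continuous_on_const continuous_on_fst continuous_on_snd continuous_on_id)
      show ?thesis using continuous_on_compose2[OF contf cP subset_UNIV] by simp
    qed
    have cK: "compact K" unfolding K_def
      by (intro compact_Int_closed compact_Times Y(2) Lam(2) closed_Collect_le continuous_on_const contK)
    have "\<exists>eta>0. \<forall>q\<in>K. \<exists>z\<in>Y. eta \<le> g (fst q) (snd q) - g z (snd q)"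
    proof (rule ccontr)
      assume nh: "\<not> (\<exists>eta>0. \<forall>q\<in>K. \<exists>z\<in>Y. eta \<le> g (fst q) (snd q) - g z (snd q))"
      have "\<forall>n. \<exists>q. q \<in> K \<and> (\<forall>z\<in>Y. g (fst q) (snd q) - g z (snd q) < inverse (real (Suc n)))"
      proof
        fix n
        have "inverse (real (Suc n)) > 0" by simp
        then show "\<exists>q. q \<in> K \<and> (\<forall>z\<in>Y. g (fst q) (snd q) - g z (snd q) < inverse (real (Suc n)))"
        proof -
          from nh have "\<forall>eta>0. \<exists>q\<in>K. \<forall>z\<in>Y. g (fst q) (snd q) - g z (snd q) < eta"
            by (auto simp: not_le)
          then obtain q where "q\<in>K" "\<forall>z\<in>Y. g (fst q) (snd q) - g z (snd q) < inverse (real (Suc n))"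
            using \<open>inverse (real (Suc n)) > 0\<close> by blast
          then show ?thesis by blast
        qed
      qed
      from choice[OF this] obtain q where
        q: "\<And>n. q n \<in> K" "\<And>n z. z \<in> Y \<Longrightarrow> g (fst (q n)) (snd (q n)) - g z (snd (q n)) < inverse (real (Suc n))"
        by blast
      obtain qb s where qb: "qb \<in> K" and s: "strict_mono s" and qs: "(q \<circ> s) \<longlonglongrightarrow> qb"
        using seq_compactE[OF compact_imp_seq_compact[OF cK]] q(1) by metis
      have qs': "(\<lambda>n. q (s n)) \<longlonglongrightarrow> qb" using qs by (simp add: comp_def)
      have qbY: "fst qb \<in> Y" "snd qb \<in> Lam" using qb unfolding K_def by auto
      have "g (fst qb) (snd qb) \<le> g z (snd qb)" if z: "z \<in> Y" for z
      proof -
        have t1: "(\<lambda>n. g (fst (q (s n))) (snd (q (s n))) - g z (snd (q (s n)))) \<longlonglongrightarrow> g (fst qb) (snd qb) - g z (snd qb)"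
          by (intro tendsto_diff tg tendsto_fst tendsto_snd qs' tendsto_const)
        have t2: "(\<lambda>n. inverse (real (Suc (s n)))) \<longlonglongrightarrow> 0"
          using LIMSEQ_subseq_LIMSEQ[OF LIMSEQ_inverse_real_of_nat s] by (simp add: comp_def)
        have "g (fst qb) (snd qb) - g z (snd qb) \<le> 0"
          using LIMSEQ_le[OF t1 t2] q(2)[OF z] less_imp_le by blast
        then show ?thesis by simp
      qed
      then have "(fst qb, snd qb) \<in> Flow Y Lam g" using FlowI qbY by blast
      then have "fo x (fst qb) (snd qb) \<le> phi" using Phiup[OF x] unfolding phi_def by fastforce
      moreover have "phi + del \<le> fo x (fst qb) (snd qb)" using qb unfolding K_def by auto
      ultimately show False using delpos by linarith
    qed
    then obtain eta where eta: "eta > 0" "\<And>q. q\<in>K \<Longrightarrow> \<exists>z\<in>Y. eta \<le> g (fst q) (snd q) - g z (snd q)"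
      by blast
    have "eventually (\<lambda>k. (M - phi) / eta \<le> rho (r k)) sequentially"
      using rhor unfolding filterlim_at_top by blast
    then obtain N where N: "\<And>k. k \<ge> N \<Longrightarrow> (M - phi) / eta \<le> rho (r k)"
      unfolding eventually_sequentially by blast
    have Fb: "Frho Y Lam (rho (r k)) fbar A B c g x \<le> phi + del" if k: "k \<ge> N" for k
      unfolding Frho_def
    proof (rule cSUP_least)
      show "Y \<times> Lam \<noteq> {}" using Y Lam by auto
    next
      fix p assume p: "p \<in> Y \<times> Lam"
      show "(INF z\<in>Y. Ppen (rho (r k)) fbar A B c g x (fst p) (snd p) z) \<le> phi + del"
      proof (cases "p \<in> K")
        case True
        then obtain z where z: "z\<in>Y" "eta \<le> g (fst p) (snd p) - g z (snd p)" using eta(2) by blast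
        have "M - phi \<le> rho (r k) * eta"
          using N[OF k] eta(1) by (simp add: pos_divide_le_eq mult.commute)
        also have "\<dots> \<le> rho (r k) * (g (fst p) (snd p) - g z (snd p))"
          using z(2) rge by (intro mult_left_mono) auto
        finally have "M - phi \<le> rho (r k) * (g (fst p) (snd p) - g z (snd p))" .
        moreover have "fo x (fst p) (snd p) \<le> M" using M[OF x, of "fst p" "snd p"] p by auto
        moreover have "(INF z\<in>Y. Ppen (rho (r k)) fbar A B c g x (fst p) (snd p) z) \<le> fo x (fst p) (snd p) - rho (r k) * (g (fst p) (snd p) - g z (snd p))"
          using INFle[OF rge x _ _ z(1)] p by auto
        ultimately show ?thesis using delpos by linarith
      next
        case False
        then have "fo x (fst p) (snd p) < phi + del" using p unfolding K_def by auto
        moreover have "(INF z\<in>Y. Ppen (rho (r k)) fbar A B c g x (fst p) (snd p) z) \<le> fo x (fst p) (snd p) - rho (r k) * (g (fst p) (snd p) - g (fst p) (snd p))"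
          using INFle[OF rge x _ _ , of "fst p" "snd p" "fst p"] p by auto
        ultimately show ?thesis by simp
      qed
    qed
    have ineq: "\<exists>N. \<forall>k\<ge>N. fo (xs (r k)) yinf linf - 2*eps (r k) \<le> phi + del"
      using key2[OF inflow x] Fb by (meson order_trans)
    have t1: "(\<lambda>k. fo (xs (r k)) yinf linf - 2*eps (r k)) \<longlonglongrightarrow> a - 2*0"
      unfolding a_def by (intro tendsto_diff tfo xl tendsto_const tendsto_mult epsr)
    have "a \<le> phi + del" using LIMSEQ_le[OF t1 tendsto_const ineq] by simp
    then show False using aphi unfolding del_def by (simp add: field_simps)
  qed
  show ?thesis
    using inflow xinfX part2 part3 Phiinf unfolding fo_def by auto
qed

end
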